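(* Let $n\ge 3$ and let $P_n(x)=x^n+a_{n-2}x^{n-2}+\cdots+a_1x+a_0$ be a real monic polynomial whose coefficient of $x^{n-1}$ is zero. For $2\le i\le n$ let $P_i=\frac{i!}{n!}P_n^{(n-i)}$, so that $P_{i-1}=\frac1iP_i'$ for $3\le i\le n$, each $P_i$ is monic of degree $i$ with zero coefficient of $x^{i-1}$, and the constant term of $P_i$ is $b_i=\frac{i!\,(n-i)!}{n!}\,a_{n-i}$. For $3\le i\le n$ define $R_{i-2}$ by $P_i(x)=xP_{i-1}(x)-R_{i-2}(x)$ and put $R^0_{i-2}=R_{i-2}+b_i$ (a polynomial not depending on $b_i$). Then $P_n$ has $n$ distinct real roots if and only if $a_{n-2}<0$ and, for every $i\in\{3,\dots,n\}$ (where, inductively, $P_{i-1}$ has $i-1$ distinct real roots $\alpha^{(i-1)}_1<\cdots<\alpha^{(i-1)}_{i-1}$): - if $i$ is even, $$\max_{k\in\{1,\dots,\frac{i-2}{2}\}}R^0_{i-2}\big(\alpha^{(i-1)}_{2k}\big)<b_i<\min_{k\in\{0,\dots,\frac{i-2}{2}\}}R^0_{i-2}\big(\alpha^{(i-1)}_{2k+1}\big);$$ - if $i$ is odd, $$\max_{k\in\{0,\dots,\frac{i-3}{2}\}}R^0_{i-2}\big(\alpha^{(i-1)}_{2k+1}\big)<b_i<\min_{k\in\{1,\dots,\frac{i-1}{2}\}}R^0_{i-2}\big(\alpha^{(i-1)}_{2k}\big).$$ (In particular each of these open intervals is nonempty.)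
   Context: $P_n^{(m)}$ denotes the $m$-th derivative. The condition $a_{n-2}<0$ is equivalent to $P_2(x)=x^2+\frac{2(n-2)!}{n!}a_{n-2}$ having two distinct real roots. $R_{i-2}(x)=xP_{i-1}(x)-P_i(x)$ has constant term $-b_i$, and $R^0_{i-2}$ is $R_{i-2}$ with its constant term removed. *)

theory Defs
  imports "HOL-Computational_Algebra.Polynomial"
begin

definition Pder :: "nat \<Rightarrow> real poly \<Rightarrow> nat \<Rightarrow> real poly" where
  "Pder n P i = smult (fact i / fact n) ((pderiv ^^ (n - i)) P)"

definition bcoef :: "nat \<Rightarrow> real poly \<Rightarrow> nat \<Rightarrow> real" where
  "bcoef n P i = fact i * fact (n - i) / fact n * coeff P (n - i)"

text \<open>Rpoly n P i is R_{i-2}, defined by P_i = x P_{i-1} - R_{i-2}\<close>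
definition Rpoly :: "nat \<Rightarrow> real poly \<Rightarrow> nat \<Rightarrow> real poly" where
  "Rpoly n P i = [:0, 1:] * Pder n P (i - 1) - Pder n P i"

text \<open>R0poly n P i is R^0_{i-2} = R_{i-2} + b_i\<close>
definition R0poly :: "nat \<Rightarrow> real poly \<Rightarrow> nat \<Rightarrow> real poly" where
  "R0poly n P i = Rpoly n P i + [:bcoef n P i:]"

text \<open>the j-th smallest real root (1-indexed)\<close>
definition alpha :: "real poly \<Rightarrow> nat \<Rightarrow> real" where
  "alpha p j = sorted_list_of_set {x. poly p x = 0} ! (j - 1)"

end

theory Submission imports Defs begin

lemma ssl_less:
  assumes "finite (A::real set)" "i < j" "j < card A"
  shows "sorted_list_of_set A ! i < sorted_list_of_set A ! j"
  using sorted_wrt_nth_less[OF strict_sorted_list_of_set assms(2)] assms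
  by simp

lemma ssl_in:
  assumes "finite (A::real set)" "i < card A"
  shows "sorted_list_of_set A ! i \<in> A"
  using assms by (metis nth_mem sorted_list_of_set.length_sorted_key_list_of_set
      sorted_list_of_set.set_sorted_key_list_of_set)

lemma ssl_cover:
  assumes "finite (A::real set)" "x \<in> A"
  shows "\<exists>i<card A. x = sorted_list_of_set A ! i"
  using assms by (metis in_set_conv_nth sorted_list_of_set.length_sorted_key_list_of_set
      sorted_list_of_set.set_sorted_key_list_of_set)

lemma prod_dvd:
  fixes p :: "real poly"
  assumes "finite S" "\<forall>x\<in>S. poly p x = 0"
  shows "(\<Prod>r\<in>S. [:-r,1:]) dvd p"
  using assms
proof (induction S rule: finite_induct)
  case empty then show ?case by simp
next
  case (insert a S)
  then obtain k where k: "p = (\<Prod>r\<in>S. [:-r,1:]) * k" by (auto elim!: dvdE)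
  have "poly (\<Prod>r\<in>S. [:-r,1:]) a \<noteq> 0"
    using insert(1,2) by (auto simp: poly_prod)
  moreover have "poly p a = 0" using insert by simp
  ultimately have "poly k a = 0" using k by simp
  then obtain k' where kk: "k = [:-a,1:] * k'" using poly_eq_0_iff_dvd by (metis dvdE)
  hence "p = ([:-a,1:] * (\<Prod>r\<in>S. [:-r,1:])) * k'" using k by (metis mult.assoc mult.commute)
  then show ?case using insert(1,2) by (simp add: dvdI)
qed

lemma monic_split:
  fixes p :: "real poly"
  assumes "degree p = m" "lead_coeff p = 1" "card {x. poly p x = 0} = m"
  shows "poly p x = (\<Prod>r\<in>{x. poly p x = 0}. (x - r))"
proof -
  let ?R = "{x. poly p x = 0}"
  have p0: "p \<noteq> 0" using assms by auto
  have fin: "finite ?R" using poly_roots_finite[OF p0] .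
  obtain k where k: "p = (\<Prod>r\<in>?R. [:-r,1:]) * k" using prod_dvd[OF fin] by (auto elim!: dvdE)
  have dQ: "degree (\<Prod>r\<in>?R. [:-r,1:]) = m"
    using assms(3) by (subst degree_prod_eq_sum_degree) auto
  have lQ: "lead_coeff (\<Prod>r\<in>?R. [:-r,1:]) = 1" by (simp add: lead_coeff_prod)
  have k0: "k \<noteq> 0" using k p0 by auto
  have Q0: "(\<Prod>r\<in>?R. [:-r,1:]) \<noteq> 0" using lQ by auto
  have "degree p = m + degree k" using k k0 dQ Q0 by (metis degree_mult_eq)
  hence dk: "degree k = 0" using assms by simp
  have "lead_coeff p = lead_coeff k" using k lQ by (metis lead_coeff_mult mult_1_left)
  hence "coeff k 0 = 1" using dk assms by simp
  hence "k = 1" using dk by (cases k) (auto simp: one_pCons split: if_splits)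
  hence "p = (\<Prod>r\<in>?R. [:-r,1:])" using k by simp
  hence "poly p x = poly (\<Prod>r\<in>?R. [:-r,1:]) x" by simp
  also have "\<dots> = (\<Prod>r\<in>?R. (x - r))" by (simp add: poly_prod)
  finally show ?thesis .
qed

lemma mono_inj:
  fixes f :: "nat \<Rightarrow> real"
  assumes "\<And>i j. i < j \<Longrightarrow> j < N \<Longrightarrow> f i < f j"
  shows "inj_on f {..<N}"
proof (rule inj_onI)
  fix i j assume "i \<in> {..<N}" "j \<in> {..<N}" "f i = f j"
  thus "i = j" using assms[of i j] assms[of j i] by (cases i j rule: linorder_cases) auto
qed

lemma rolle_chain:
  fixes p :: "real poly"
  assumes "p \<noteq> 0" "card {x. poly p x = 0} = m"
  shows "\<exists>z. \<forall>i. Suc i < m \<longrightarrow> sorted_list_of_set {x. poly p x = 0} ! i < z i \<and>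
     z i < sorted_list_of_set {x. poly p x = 0} ! Suc i \<and> poly (pderiv p) (z i) = 0"
proof -
  let ?R = "{x. poly p x = 0}"
  let ?r = "\<lambda>i. sorted_list_of_set ?R ! i"
  have fin: "finite ?R" using poly_roots_finite[OF assms(1)] .
  have "\<forall>i. \<exists>z. Suc i < m \<longrightarrow> ?r i < z \<and> z < ?r (Suc i) \<and> poly (pderiv p) z = 0"
  proof
    fix i
    show "\<exists>z. Suc i < m \<longrightarrow> ?r i < z \<and> z < ?r (Suc i) \<and> poly (pderiv p) z = 0"
    proof (cases "Suc i < m")
      case True
      have lt: "?r i < ?r (Suc i)" using ssl_less[OF fin, of i "Suc i"] True assms(2) by simp
      have "?r i \<in> ?R" "?r (Suc i) \<in> ?R" using ssl_in[OF fin] True assms(2) by auto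
      hence e: "poly p (?r (Suc i)) - poly p (?r i) = 0" by simp
      obtain x where "?r i < x" "x < ?r (Suc i)"
        "poly p (?r (Suc i)) - poly p (?r i) = (?r (Suc i) - ?r i) * poly (pderiv p) x"
        using poly_MVT[OF lt] by blast
      thus ?thesis using e lt by (intro exI[of _ x]) auto
    qed auto
  qed
  thus ?thesis by metis
qed

lemma rolle_card:
  fixes p :: "real poly"
  assumes "degree p = m" "m \<ge> 1" "card {x. poly p x = 0} = m"
  shows "card {x. poly (pderiv p) x = 0} = m - 1"
proof -
  let ?R = "{x. poly p x = 0}"
  let ?r = "\<lambda>i. sorted_list_of_set ?R ! i"
  have p0: "p \<noteq> 0" using assms by auto
  have fin: "finite ?R" using poly_roots_finite[OF p0] .
  obtain z where z: "\<And>i. Suc i < m \<Longrightarrow> ?r i < z i \<and> z i < ?r (Suc i) \<and> poly (pderiv p) (z i) = 0"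
    using rolle_chain[OF p0 assms(3)] by blast
  have inc: "z i < z j" if "i < j" "j < m - 1" for i j
  proof -
    have "?r (Suc i) \<le> ?r j"
    proof (cases "Suc i = j")
      case False
      hence "Suc i < j" "j < card ?R" using that assms(3) by auto
      thus ?thesis using ssl_less[OF fin, of "Suc i" j] by simp
    qed simp
    thus ?thesis using z[of i] z[of j] that by linarith
  qed
  have inj: "inj_on z {..<m-1}" by (rule mono_inj) (use inc in auto)
  have d0: "pderiv p \<noteq> 0" using assms by (simp add: pderiv_eq_0_iff)
  have sub: "z ` {..<m-1} \<subseteq> {x. poly (pderiv p) x = 0}" using z by auto
  have "m - 1 \<le> card {x. poly (pderiv p) x = 0}"
    using card_mono[OF poly_roots_finite[OF d0] sub] card_image[OF inj] by simp
  moreover have "card {x. poly (pderiv p) x = 0} \<le> m - 1"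
    using card_poly_roots_bound[OF d0] assms by (simp add: degree_pderiv)
  ultimately show ?thesis by simp
qed

lemma key_fwd:
  fixes p :: "real poly"
  assumes m2: "m \<ge> 2" and dp: "degree p = m" and lc: "lead_coeff p = 1"
    and cS: "card {x. poly (pderiv p) x = 0} = m - 1"
    and cR: "card {x. poly p x = 0} = m"
    and j: "1 \<le> j" "j \<le> m - 1"
  shows "if even (m - j) then poly p (alpha (pderiv p) j) > 0 else poly p (alpha (pderiv p) j) < 0"
proof -
  let ?R = "{x. poly p x = 0}"
  let ?S = "{x. poly (pderiv p) x = 0}"
  let ?r = "\<lambda>i. sorted_list_of_set ?R ! i"
  have p0: "p \<noteq> 0" using dp m2 by auto
  have fin: "finite ?R" using poly_roots_finite[OF p0] .
  have d0: "pderiv p \<noteq> 0" using dp m2 by (simp add: pderiv_eq_0_iff)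
  have finS: "finite ?S" using poly_roots_finite[OF d0] .
  obtain z where z: "\<And>i. Suc i < m \<Longrightarrow> ?r i < z i \<and> z i < ?r (Suc i) \<and> poly (pderiv p) (z i) = 0"
    using rolle_chain[OF p0 cR] by blast
  have rinc: "?r i < ?r j" if "i < j" "j < m" for i j using ssl_less[OF fin, of i j] that cR by simp
  have rle: "?r i \<le> ?r j" if "i \<le> j" "j < m" for i j using rinc[of i j] that by (cases "i = j") auto
  have inc: "z i < z j" if "i < j" "j < m - 1" for i j
  proof -
    have "?r (Suc i) \<le> ?r j" using rle[of "Suc i" j] that by simp
    thus ?thesis using z[of i] z[of j] that by linarith
  qed
  have inj: "inj_on z {..<m-1}" by (rule mono_inj) (use inc in auto)
  have sub: "z ` {..<m-1} \<subseteq> ?S" using z by auto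
  have imS: "z ` {..<m-1} = ?S"
    by (rule card_subset_eq[OF finS sub]) (use card_image[OF inj] cS in simp)
  have sw: "sorted_wrt (<) (map z [0..<m-1])"
    unfolding sorted_wrt_iff_nth_less using inc by auto
  have "sorted_list_of_set ?S = map z [0..<m-1]"
    using sorted_list_of_set_unique[OF finS, of "map z [0..<m-1]"] sw imS cS by (simp add: lessThan_atLeast0)
  hence aw: "alpha (pderiv p) j = z (j - 1)" using j unfolding alpha_def by simp
  define w where "w = z (j - 1)"
  have jm: "j - 1 < m" using j by linarith
  have w1: "?r (j - 1) < w" and w2: "w < ?r j" using z[of "j - 1"] j unfolding w_def by auto
  define A where "A = {r\<in>?R. r < w}"
  define B where "B = {r\<in>?R. w < r}"
  have cov: "\<exists>l<m. r = ?r l" if "r \<in> ?R" for r using ssl_cover[OF fin that] cR by auto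
  have RAB: "?R = A \<union> B"
  proof -
    have "r < w \<or> w < r" if rR: "r \<in> ?R" for r
    proof -
      obtain l where l: "l < m" "r = ?r l" using cov rR by blast
      show ?thesis
      proof (cases "l \<le> j - 1")
        case True thus ?thesis using rle[OF True jm] w1 l by auto
      next
        case False hence "j \<le> l" using j by linarith
        thus ?thesis using rle[of j l] w2 l by auto
      qed
    qed
    thus ?thesis unfolding A_def B_def by auto
  qed
  have Bim: "B = ?r ` {j..<m}"
  proof
    show "B \<subseteq> ?r ` {j..<m}"
    proof
      fix r assume "r \<in> B"
      hence rR: "r \<in> ?R" and wr: "w < r" unfolding B_def by auto
      obtain l where l: "l < m" "r = ?r l" using cov rR by blast
      have "\<not> l \<le> j - 1" using rle[OF _ jm, of l] w1 wr l by auto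
      thus "r \<in> ?r ` {j..<m}" using l by auto
    qed
  next
    show "?r ` {j..<m} \<subseteq> B"
    proof
      fix r assume "r \<in> ?r ` {j..<m}"
      then obtain l where l: "j \<le> l" "l < m" "r = ?r l" by auto
      have "r \<in> ?R" using ssl_in[OF fin, of l] l cR by simp
      moreover have "w < r" using rle[of j l] l w2 by auto
      ultimately show "r \<in> B" unfolding B_def by auto
    qed
  qed
  have injr: "inj_on ?r {..<m}" by (rule mono_inj) (use rinc in auto)
  have cB: "card B = m - j"
    unfolding Bim by (subst card_image) (auto intro: inj_on_subset[OF injr])
  have finA: "finite A" "finite B" using fin unfolding A_def B_def by auto
  have disj: "A \<inter> B = {}" unfolding A_def B_def by auto
  have "poly p w = (\<Prod>r\<in>?R. (w - r))" using monic_split[OF dp lc cR] .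
  also have "\<dots> = (\<Prod>r\<in>A. (w - r)) * (\<Prod>r\<in>B. (w - r))"
    unfolding RAB by (rule prod.union_disjoint[OF finA disj])
  also have "(\<Prod>r\<in>B. (w - r)) = (\<Prod>r\<in>B. - (r - w))" by simp
  also have "\<dots> = (-1) ^ (m - j) * (\<Prod>r\<in>B. (r - w))" using prod_uminus[of "\<lambda>r. r - w" B] unfolding cB .
  finally have pw: "poly p w = (\<Prod>r\<in>A. (w - r)) * ((-1) ^ (m - j) * (\<Prod>r\<in>B. (r - w)))" .
  have pA: "(\<Prod>r\<in>A. (w - r)) > 0" by (rule prod_pos) (auto simp: A_def)
  have pB: "(\<Prod>r\<in>B. (r - w)) > 0" by (rule prod_pos) (auto simp: B_def)
  show ?thesis
    unfolding aw w_def[symmetric] pw using pA pB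
    by (auto simp: mult_pos_neg mult_pos_pos)
qed

lemma key_bwd:
  fixes p :: "real poly"
  assumes m2: "m \<ge> 2" and dp: "degree p = m" and lc: "lead_coeff p = 1"
    and cS: "card {x. poly (pderiv p) x = 0} = m - 1"
    and sg: "\<forall>j\<in>{1..m-1}. if even (m - j) then poly p (alpha (pderiv p) j) > 0
                  else poly p (alpha (pderiv p) j) < 0"
  shows "card {x. poly p x = 0} = m"
proof -
  let ?R = "{x. poly p x = 0}"
  let ?S = "{x. poly (pderiv p) x = 0}"
  define \<beta> where "\<beta> j = alpha (pderiv p) j" for j
  have p0: "p \<noteq> 0" using dp m2 by auto
  have fin: "finite ?R" using poly_roots_finite[OF p0] .
  have d0: "pderiv p \<noteq> 0" using dp m2 by (simp add: pderiv_eq_0_iff)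
  have finS: "finite ?S" using poly_roots_finite[OF d0] .
  have binc: "\<beta> i < \<beta> j" if "1 \<le> i" "i < j" "j \<le> m - 1" for i j
    unfolding \<beta>_def alpha_def using ssl_less[OF finS, of "i - 1" "j - 1"] that cS by simp
  have ble: "\<beta> i \<le> \<beta> j" if "1 \<le> i" "i \<le> j" "j \<le> m - 1" for i j
    using binc[of i j] that by (cases "i = j") auto
  have sgj: "if even (m - j) then poly p (\<beta> j) > 0 else poly p (\<beta> j) < 0"
    if "1 \<le> j" "j \<le> m - 1" for j using sg that unfolding \<beta>_def by auto
  obtain N where N: "\<forall>x\<ge>N. poly p x \<ge> 1" using poly_pinfty_gt_lc[of p] lc by auto
  have top: "\<exists>x. poly p x = 0 \<and> \<beta> (m - 1) < x"
  proof -
    define x0 where "x0 = max N (\<beta> (m - 1) + 1)"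
    have "poly p x0 > 0" using N unfolding x0_def by (meson max.cobounded1 less_le_trans zero_less_one)
    moreover have "poly p (\<beta> (m - 1)) < 0" using sgj[of "m - 1"] m2 by auto
    moreover have "\<beta> (m - 1) < x0" unfolding x0_def by auto
    ultimately show ?thesis using poly_IVT_pos[of "\<beta> (m - 1)" x0 p] by auto
  qed
  define q where "q = smult ((-1) ^ m) (p \<circ>\<^sub>p [:0, -1:])"
  have lq: "lead_coeff q = 1"
    unfolding q_def using lc dp
    by (simp add: lead_coeff_comp flip: power_mult_distrib)
  have pq: "poly q x = (-1) ^ m * poly p (- x)" for x unfolding q_def by (simp add: poly_pcompose)
  obtain N' where N': "\<forall>x\<ge>N'. poly q x \<ge> 1" using poly_pinfty_gt_lc[of q] lq by auto
  have bot: "\<exists>x. poly p x = 0 \<and> x < \<beta> 1"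
  proof -
    define y where "y = - max N' (1 - \<beta> 1)"
    have "poly q (- y) \<ge> 1" using N' unfolding y_def by auto
    hence qy: "(-1) ^ m * poly p y \<ge> 1" using pq[of "-y"] by simp
    have yb: "y < \<beta> 1" unfolding y_def by auto
    have s1: "if even (m - 1) then poly p (\<beta> 1) > 0 else poly p (\<beta> 1) < 0" using sgj[of 1] m2 by auto
    show ?thesis
    proof (cases "even m")
      case True
      hence "poly p y > 0" "poly p (\<beta> 1) < 0" using qy s1 m2 by auto
      thus ?thesis using poly_IVT_neg[OF yb] by auto
    next
      case False
      hence "poly p y < 0" "poly p (\<beta> 1) > 0" using qy s1 m2 by auto
      thus ?thesis using poly_IVT_pos[OF yb] by auto
    qed
  qed
  have mid: "\<exists>x. poly p x = 0 \<and> \<beta> j < x \<and> x < \<beta> (Suc j)" if "1 \<le> j" "Suc j \<le> m - 1" for j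
  proof -
    have lt: "\<beta> j < \<beta> (Suc j)" using binc that by auto
    have "poly p (\<beta> j) * poly p (\<beta> (Suc j)) < 0"
    proof -
      have a: "if even (m - j) then poly p (\<beta> j) > 0 else poly p (\<beta> j) < 0" using sgj that by auto
      have b: "if even (m - Suc j) then poly p (\<beta> (Suc j)) > 0 else poly p (\<beta> (Suc j)) < 0"
        using sgj that by auto
      have e: "m - j = Suc (m - Suc j)" using that by arith
      show ?thesis
      proof (cases "even (m - j)")
        case True
        hence "\<not> even (m - Suc j)" using e by simp
        thus ?thesis using a b True by (simp add: mult_pos_neg)
      next
        case False
        hence "even (m - Suc j)" using e by simp
        thus ?thesis using a b False by (simp add: mult_neg_pos)
      qed
    qed
    thus ?thesis using poly_IVT[OF lt] by auto
  qed
  have ex: "\<forall>i. \<exists>x. i < m \<longrightarrow> poly p x = 0 \<and> (i = 0 \<or> \<beta> i < x) \<and> (i = m - 1 \<or> x < \<beta> (Suc i))"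
  proof
    fix i
    show "\<exists>x. i < m \<longrightarrow> poly p x = 0 \<and> (i = 0 \<or> \<beta> i < x) \<and> (i = m - 1 \<or> x < \<beta> (Suc i))"
    proof (cases "i < m")
      case True
      show ?thesis
      proof (cases "i = 0")
        case True thus ?thesis using bot by auto
      next
        case False
        show ?thesis
        proof (cases "i = m - 1")
          case True thus ?thesis using top by auto
        next
          case False' : False
          thus ?thesis using mid[of i] False \<open>i < m\<close> by auto
        qed
      qed
    qed auto
  qed
  obtain r where r: "\<And>i. i < m \<Longrightarrow> poly p (r i) = 0 \<and> (i = 0 \<or> \<beta> i < r i) \<and> (i = m - 1 \<or> r i < \<beta> (Suc i))"
    using ex by metis
  have inc: "r i < r j" if "i < j" "j < m" for i j
  proof -
    have "r i < \<beta> (Suc i)" using r[of i] that by auto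
    moreover have "\<beta> (Suc i) \<le> \<beta> j" using ble[of "Suc i" j] that by auto
    moreover have "\<beta> j < r j" using r[of j] that by auto
    ultimately show ?thesis by linarith
  qed
  have inj: "inj_on r {..<m}" by (rule mono_inj) (use inc in auto)
  have sub: "r ` {..<m} \<subseteq> ?R" using r by auto
  have "m \<le> card ?R" using card_mono[OF fin sub] card_image[OF inj] by simp
  moreover have "card ?R \<le> m" using card_poly_roots_bound[OF p0] dp by simp
  ultimately show ?thesis by simp
qed

lemma coeff_pderiv_iter:
  "coeff ((pderiv ^^ k) (P::real poly)) j = fact (j + k) / fact j * coeff P (j + k)"
proof (induction k arbitrary: j)
  case 0 then show ?case by simp
next
  case (Suc k)
  have "coeff ((pderiv ^^ Suc k) P) j = of_nat (Suc j) * coeff ((pderiv ^^ k) P) (Suc j)"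
    by (simp add: coeff_pderiv)
  also have "\<dots> = of_nat (Suc j) * (fact (Suc j + k) / fact (Suc j) * coeff P (Suc j + k))"
    using Suc by simp
  also have "\<dots> = fact (j + Suc k) / fact j * coeff P (j + Suc k)"
    by (simp add: fact_Suc field_simps del: of_nat_Suc)
  finally show ?case .
qed

lemma coeff_Pder:
  assumes "i \<le> n"
  shows "coeff (Pder n P i) l = fact i / fact n * (fact (l + (n - i)) / fact l * coeff P (l + (n - i)))"
  unfolding Pder_def by (simp add: coeff_pderiv_iter)

lemma Pder_props:
  assumes "i \<le> n" "degree P = n" "lead_coeff P = 1"
  shows "degree (Pder n P i) = i" "lead_coeff (Pder n P i) = 1"
proof -
  have ci: "coeff (Pder n P i) i = 1" using assms by (simp add: coeff_Pder)
  have "coeff (Pder n P i) l = 0" if "l > i" for l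
  proof -
    have "l + (n - i) > n" using that assms by simp
    hence "coeff P (l + (n - i)) = 0" using assms(2) by (simp add: coeff_eq_0)
    thus ?thesis using assms by (simp add: coeff_Pder)
  qed
  hence "degree (Pder n P i) \<le> i" by (simp add: degree_le)
  moreover have "degree (Pder n P i) \<ge> i" using ci by (simp add: le_degree)
  ultimately show d: "degree (Pder n P i) = i" by simp
  show "lead_coeff (Pder n P i) = 1" using ci d by simp
qed

lemma Pder_n: "Pder n P n = P" unfolding Pder_def by simp

lemma pderiv_Pder:
  assumes "1 \<le> i" "i \<le> n"
  shows "pderiv (Pder n P i) = smult (of_nat i) (Pder n P (i - 1))"
proof -
  have e: "n - (i - 1) = Suc (n - i)" using assms by arith
  have f: "fact i / fact n = (of_nat i :: real) * (fact (i - 1) / fact n)"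
  proof -
    obtain i' where "i = Suc i'" using assms by (cases i) auto
    thus ?thesis by (simp add: fact_Suc del: of_nat_Suc)
  qed
  show ?thesis unfolding Pder_def e
    by (simp add: pderiv_smult f)
qed

lemma roots_pderiv_Pder:
  assumes "1 \<le> i" "i \<le> n"
  shows "{x. poly (pderiv (Pder n P i)) x = 0} = {x. poly (Pder n P (i - 1)) x = 0}"
  using assms by (simp add: pderiv_Pder)

lemma R0_val:
  assumes "poly (Pder n P (i - 1)) x = 0"
  shows "poly (R0poly n P i) x = bcoef n P i - poly (Pder n P i) x"
  using assms unfolding R0poly_def Rpoly_def by simp

lemma P2_neg:
  assumes "n \<ge> 3" "degree P = n" "lead_coeff P = 1" "coeff P (n - 1) = 0"
    and c2: "card {x. poly (Pder n P 2) x = 0} = 2"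
  shows "coeff P (n - 2) < 0"
proof (rule ccontr)
  assume "\<not> coeff P (n - 2) < 0"
  hence a: "coeff P (n - 2) \<ge> 0" by simp
  let ?Q = "Pder n P 2"
  have dQ: "degree ?Q = 2" using Pder_props[of 2 n P] assms by simp
  have c0: "coeff ?Q 0 = 2 / fact n * (fact (n - 2) * coeff P (n - 2))"
    using assms by (simp add: coeff_Pder)
  have c0p: "coeff ?Q 0 \<ge> 0" unfolding c0 using a by simp
  have e1: "Suc (n - 2) = n - 1" using assms by simp
  have c1: "coeff ?Q 1 = 0" using assms by (simp add: coeff_Pder e1)
  have c2': "coeff ?Q 2 = 1" using Pder_props[of 2 n P] assms by simp
  have pv: "poly ?Q x = coeff ?Q 0 + x^2" for x
    unfolding poly_altdef dQ using c1 c2' by (simp add: numeral_2_eq_2)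
  have "{x. poly ?Q x = 0} \<subseteq> {0}"
  proof
    fix x assume "x \<in> {x. poly ?Q x = 0}"
    hence "coeff ?Q 0 + x^2 = 0" using pv by simp
    hence "x^2 \<le> 0" using c0p by linarith
    hence "x^2 = 0" using zero_le_power2[of x] by linarith
    hence "x = 0" by simp
    thus "x \<in> {0}" by simp
  qed
  hence "card {x. poly ?Q x = 0} \<le> card {0::real}" by (rule card_mono[rotated]) simp
  hence "card {x. poly ?Q x = 0} \<le> 1" by simp
  thus False using c2 by simp
qed

lemma translate:
  fixes F :: "nat \<Rightarrow> real"
  assumes i3: "i \<ge> 3"
  shows "(\<forall>j\<in>{1..i-1}. if even (i - j) then b - F j > 0 else b - F j < 0) \<longleftrightarrow>
    ((even i \<longrightarrow> Max ((\<lambda>k. F (2 * k)) ` {1..(i - 2) div 2}) < b \<and>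
                   b < Min ((\<lambda>k. F (2 * k + 1)) ` {0..(i - 2) div 2})) \<and>
     (odd i \<longrightarrow> Max ((\<lambda>k. F (2 * k + 1)) ` {0..(i - 3) div 2}) < b \<and>
                   b < Min ((\<lambda>k. F (2 * k)) ` {1..(i - 1) div 2})))"
proof (cases "even i")
  case True
  have "i \<ge> 4" using True i3 by presburger
  hence ne1: "{1..(i - 2) div 2} \<noteq> {}" by auto
  have ne2: "{0..(i - 2) div 2} \<noteq> {}" by auto
  have "(\<forall>j\<in>{1..i-1}. if even (i - j) then b - F j > 0 else b - F j < 0) \<longleftrightarrow>
        (\<forall>k\<in>{1..(i - 2) div 2}. F (2 * k) < b) \<and> (\<forall>k\<in>{0..(i - 2) div 2}. b < F (2 * k + 1))"
  proof safe
    fix k assume h: "\<forall>j\<in>{1..i-1}. if even (i - j) then b - F j > 0 else b - F j < 0"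
    { assume "k \<in> {1..(i - 2) div 2}"
      hence kl: "1 \<le> k" "k \<le> (i - 2) div 2" by auto
      have "2 * k \<in> {1..i-1}" using kl True i3 by auto
      moreover have "even (i - 2 * k)" using kl True i3 by presburger
      ultimately show "F (2 * k) < b" using h[THEN bspec, of "2 * k"] by auto }
    { assume "k \<in> {0..(i - 2) div 2}"
      hence kl: "k \<le> (i - 2) div 2" by auto
      have "2 * k + 1 \<in> {1..i-1}" using kl True i3 by auto
      moreover have "\<not> even (i - (2 * k + 1))" using kl True i3 by presburger
      ultimately show "b < F (2 * k + 1)" using h[THEN bspec, of "2 * k + 1"] by auto }
  next
    fix j assume h1: "\<forall>k\<in>{1..(i - 2) div 2}. F (2 * k) < b"
      and h2: "\<forall>k\<in>{0..(i - 2) div 2}. b < F (2 * k + 1)" and j: "j \<in> {1..i-1}"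
    have jl: "1 \<le> j" "j \<le> i - 1" using j by auto
    show "if even (i - j) then b - F j > 0 else b - F j < 0"
    proof (cases "even j")
      case True
      have "j = 2 * (j div 2)" using True by simp
      moreover have "j div 2 \<in> {1..(i - 2) div 2}" unfolding atLeastAtMost_iff using jl True \<open>even i\<close> by presburger
      moreover have "even (i - j)" using jl True \<open>even i\<close> by presburger
      ultimately show ?thesis using h1 by (metis diff_gt_0_iff_gt)
    next
      case False
      have "j = 2 * (j div 2) + 1" using False by presburger
      moreover have "j div 2 \<in> {0..(i - 2) div 2}" unfolding atLeastAtMost_iff using jl False \<open>even i\<close> by presburger
      moreover have "\<not> even (i - j)" using jl False \<open>even i\<close> by presburger
      ultimately show ?thesis using h2 by (metis diff_less_0_iff_less)
    qed
  qed
  thus ?thesis using True ne1 ne2 by (simp add: Max_less_iff Min_gr_iff)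
next
  case False
  have ne1: "{1..(i - 1) div 2} \<noteq> {}" using False i3 by auto
  have ne2: "{0..(i - 3) div 2} \<noteq> {}" by auto
  have "(\<forall>j\<in>{1..i-1}. if even (i - j) then b - F j > 0 else b - F j < 0) \<longleftrightarrow>
        (\<forall>k\<in>{0..(i - 3) div 2}. F (2 * k + 1) < b) \<and> (\<forall>k\<in>{1..(i - 1) div 2}. b < F (2 * k))"
  proof safe
    fix k assume h: "\<forall>j\<in>{1..i-1}. if even (i - j) then b - F j > 0 else b - F j < 0"
    { assume "k \<in> {0..(i - 3) div 2}"
      hence kl: "k \<le> (i - 3) div 2" by auto
      have "2 * k + 1 \<in> {1..i-1}" using kl False i3 by auto
      moreover have "even (i - (2 * k + 1))" using kl False i3 by presburger
      ultimately show "F (2 * k + 1) < b" using h[THEN bspec, of "2 * k + 1"] by auto }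
    { assume "k \<in> {1..(i - 1) div 2}"
      hence kl: "1 \<le> k" "k \<le> (i - 1) div 2" by auto
      have "2 * k \<in> {1..i-1}" using kl False i3 by auto
      moreover have "\<not> even (i - 2 * k)" using kl False i3 by presburger
      ultimately show "b < F (2 * k)" using h[THEN bspec, of "2 * k"] by auto }
  next
    fix j assume h1: "\<forall>k\<in>{0..(i - 3) div 2}. F (2 * k + 1) < b"
      and h2: "\<forall>k\<in>{1..(i - 1) div 2}. b < F (2 * k)" and j: "j \<in> {1..i-1}"
    have jl: "1 \<le> j" "j \<le> i - 1" using j by auto
    show "if even (i - j) then b - F j > 0 else b - F j < 0"
    proof (cases "even j")
      case True
      have "j = 2 * (j div 2)" using True by simp
      moreover have "j div 2 \<in> {1..(i - 1) div 2}" unfolding atLeastAtMost_iff using jl True \<open>odd i\<close> by presburger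
      moreover have "\<not> even (i - j)" using jl True \<open>odd i\<close> by presburger
      ultimately show ?thesis using h2 by (metis diff_less_0_iff_less)
    next
      case False
      have "j = 2 * (j div 2) + 1" using False by presburger
      moreover have "j div 2 \<in> {0..(i - 3) div 2}" unfolding atLeastAtMost_iff using jl False \<open>odd i\<close> by presburger
      moreover have "even (i - j)" using jl False \<open>odd i\<close> by presburger
      ultimately show ?thesis using h1 by (metis diff_gt_0_iff_gt)
    qed
  qed
  thus ?thesis using False ne1 ne2 by (simp add: Max_less_iff Min_gr_iff)
qed

lemma step:
  assumes n3: "n \<ge> 3" and dP: "degree P = n" and lP: "lead_coeff P = 1"
    and i: "3 \<le> i" "i \<le> n"
    and D: "card {x. poly (Pder n P (i - 1)) x = 0} = i - 1"
  shows "card {x. poly (Pder n P i) x = 0} = i \<longleftrightarrow>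
        ((even i \<longrightarrow>
           Max ((\<lambda>k. poly (R0poly n P i) (alpha (Pder n P (i - 1)) (2 * k))) ` {1..(i - 2) div 2})
             < bcoef n P i \<and>
           bcoef n P i <
           Min ((\<lambda>k. poly (R0poly n P i) (alpha (Pder n P (i - 1)) (2 * k + 1))) ` {0..(i - 2) div 2})) \<and>
        (odd i \<longrightarrow>
           Max ((\<lambda>k. poly (R0poly n P i) (alpha (Pder n P (i - 1)) (2 * k + 1))) ` {0..(i - 3) div 2})
             < bcoef n P i \<and>
           bcoef n P i <
           Min ((\<lambda>k. poly (R0poly n P i) (alpha (Pder n P (i - 1)) (2 * k))) ` {1..(i - 1) div 2})))"
proof -
  let ?p = "Pder n P i"
  let ?q = "Pder n P (i - 1)"
  define F where "F j = poly (R0poly n P i) (alpha ?q j)" for j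
  define b where "b = bcoef n P i"
  have dp: "degree ?p = i" and lc: "lead_coeff ?p = 1" using Pder_props[OF i(2) dP lP] by auto
  have rts: "{x. poly (pderiv ?p) x = 0} = {x. poly ?q x = 0}"
    using roots_pderiv_Pder[of i n P] i by simp
  have cS: "card {x. poly (pderiv ?p) x = 0} = i - 1" using rts D by simp
  have al: "alpha (pderiv ?p) j = alpha ?q j" for j unfolding alpha_def rts ..
  have m2: "i \<ge> 2" using i by simp
  have A: "card {x. poly ?p x = 0} = i \<longleftrightarrow>
      (\<forall>j\<in>{1..i-1}. if even (i - j) then poly ?p (alpha ?q j) > 0 else poly ?p (alpha ?q j) < 0)"
  proof
    assume c: "card {x. poly ?p x = 0} = i"
    show "\<forall>j\<in>{1..i-1}. if even (i - j) then poly ?p (alpha ?q j) > 0 else poly ?p (alpha ?q j) < 0"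
    proof
      fix j assume "j \<in> {1..i-1}"
      thus "if even (i - j) then poly ?p (alpha ?q j) > 0 else poly ?p (alpha ?q j) < 0"
        using key_fwd[OF m2 dp lc cS c, of j, unfolded al] by simp
    qed
  next
    assume "\<forall>j\<in>{1..i-1}. if even (i - j) then poly ?p (alpha ?q j) > 0 else poly ?p (alpha ?q j) < 0"
    thus "card {x. poly ?p x = 0} = i" using key_bwd[OF m2 dp lc cS, unfolded al] by blast
  qed
  have q0: "?q \<noteq> 0" using Pder_props[of "i - 1" n P] dP lP i by (metis leading_coeff_0_iff diff_le_self le_trans zero_neq_one)
  have B: "poly ?p (alpha ?q j) = b - F j" if "j \<in> {1..i-1}" for j
  proof -
    have "poly ?q (alpha ?q j) = 0"
      using ssl_in[OF poly_roots_finite[OF q0], of "j - 1"] that D unfolding alpha_def by auto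
    thus ?thesis unfolding F_def b_def using R0_val by simp
  qed
  have "(\<forall>j\<in>{1..i-1}. if even (i - j) then poly ?p (alpha ?q j) > 0 else poly ?p (alpha ?q j) < 0)
     \<longleftrightarrow> (\<forall>j\<in>{1..i-1}. if even (i - j) then b - F j > 0 else b - F j < 0)"
    using B by auto
  thus ?thesis using A translate[OF i(1), of b F] unfolding F_def b_def by simp
qed

theorem theorem2:
  fixes P :: "real poly" and n :: nat
  assumes "n \<ge> 3" and "degree P = n" and "lead_coeff P = 1"
    and "coeff P (n - 1) = 0"
  shows "card {x::real. poly P x = 0} = n \<longleftrightarrow>
    (coeff P (n - 2) < 0 \<and>
     (\<forall>i\<in>{3..n}.
        card {x::real. poly (Pder n P (i - 1)) x = 0} = i - 1 \<and>
        (even i \<longrightarrow>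
           Max ((\<lambda>k. poly (R0poly n P i) (alpha (Pder n P (i - 1)) (2 * k))) ` {1..(i - 2) div 2})
             < bcoef n P i \<and>
           bcoef n P i <
           Min ((\<lambda>k. poly (R0poly n P i) (alpha (Pder n P (i - 1)) (2 * k + 1))) ` {0..(i - 2) div 2})) \<and>
        (odd i \<longrightarrow>
           Max ((\<lambda>k. poly (R0poly n P i) (alpha (Pder n P (i - 1)) (2 * k + 1))) ` {0..(i - 3) div 2})
             < bcoef n P i \<and>
           bcoef n P i <
           Min ((\<lambda>k. poly (R0poly n P i) (alpha (Pder n P (i - 1)) (2 * k))) ` {1..(i - 1) div 2}))))"
proof -
  have n1: "n - 1 \<ge> 2" using assms(1) by simp
  have desc: "card {x. poly (Pder n P (n - k)) x = 0} = n - k"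
    if c: "card {x::real. poly P x = 0} = n" and k: "k \<le> n - 2" for k
    using k
  proof (induction k)
    case 0 thus ?case using c by (simp add: Pder_n)
  next
    case (Suc k)
    have i: "1 \<le> n - k" "n - k \<le> n" using Suc.prems by auto
    have IH: "card {x. poly (Pder n P (n - k)) x = 0} = n - k" using Suc by simp
    have "card {x. poly (pderiv (Pder n P (n - k))) x = 0} = n - k - 1"
      using rolle_card[OF Pder_props(1)[OF i(2) assms(2,3)] i(1) IH] .
    thus ?case using roots_pderiv_Pder[OF i, of P] by simp
  qed
  show ?thesis (is "?L \<longleftrightarrow> ?A \<and> (\<forall>i\<in>{3..n}. ?G i)")
  proof
    assume c: "card {x::real. poly P x = 0} = n"
    have D: "card {x. poly (Pder n P i) x = 0} = i" if "2 \<le> i" "i \<le> n" for i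
      using desc[OF c, of "n - i"] that by simp
    have "coeff P (n - 2) < 0" using P2_neg[OF assms] D[of 2] assms(1) by simp
    moreover have "?G i" if i: "i \<in> {3..n}" for i
    proof -
      have i': "3 \<le> i" "i \<le> n" using i by auto
      have D1: "card {x. poly (Pder n P (i - 1)) x = 0} = i - 1" using D[of "i - 1"] i' by simp
      have Di: "card {x. poly (Pder n P i) x = 0} = i" using D i' by simp
      show ?thesis using D1 iffD1[OF step[OF assms(1,2,3) i' D1] Di] by (rule conjI)
    qed
    ultimately show "?A \<and> (\<forall>i\<in>{3..n}. ?G i)" by blast
  next
    assume h: "?A \<and> (\<forall>i\<in>{3..n}. ?G i)"
    have nm: "n \<in> {3..n}" using assms(1) by simp
    have all: "\<forall>i\<in>{3..n}. ?G i" using h by (rule conjunct2)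
    have g: "?G n" using bspec[OF all nm] .
    have D1: "card {x. poly (Pder n P (n - 1)) x = 0} = n - 1" using g by (rule conjunct1)
    have "card {x. poly (Pder n P n) x = 0} = n"
      using iffD2[OF step[OF assms(1,2,3) assms(1) order_refl D1] conjunct2[OF g]] .
    thus ?L by (simp add: Pder_n)
  qed
qed

end
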